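(* For all $s,t\in\mathbb{N}$ there exists $\delta=\delta(s,t)$ such that the following holds. Let $G$ be a graph with no minor in $\mathcal{K}_{s,t}$, and let $\{A,B\}$ be a partition of $V(G)$ such that $G[B]$ is connected and every vertex of $B$ has at least $s$ neighbours in $A$. Then $|B|\le\delta|A|$.
   Context: Graphs are finite, simple and undirected. For $s,t\in\mathbb{N}$, $\mathcal{K}_{s,t}$ is the class of graphs $G$ for which there is a partition $\{A,B\}$ of $V(G)$ with $|A|=s$, $|B|=t$, $vw\in E(G)$ for all $v\in A$ and $w\in B$, and $G[B]$ connected. "$G$ has no minor in $\mathcal{K}_{s,t}$" means no graph of $\mathcal{K}_{s,t}$ is isomorphic to a minor of $G$. *)

theory Defs
  imports Complex_Main
begin

definition graph :: "'a set \<Rightarrow> 'a set set \<Rightarrow> bool" where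
  "graph V E \<longleftrightarrow> finite V \<and> (\<forall>e\<in>E. \<exists>u v. e = {u, v} \<and> u \<noteq> v \<and> u \<in> V \<and> v \<in> V)"

definition connected_set :: "'a set set \<Rightarrow> 'a set \<Rightarrow> bool" where
  "connected_set E X \<longleftrightarrow> X \<noteq> {} \<and>
     (\<forall>u\<in>X. \<forall>v\<in>X. (\<lambda>x y. x \<in> X \<and> y \<in> X \<and> {x, y} \<in> E)\<^sup>*\<^sup>* u v)"

definition is_minor :: "'b set \<Rightarrow> 'b set set \<Rightarrow> 'a set \<Rightarrow> 'a set set \<Rightarrow> bool" where
  "is_minor VH EH VG EG \<longleftrightarrow> (\<exists>\<phi> :: 'b \<Rightarrow> 'a set.
     (\<forall>v\<in>VH. \<phi> v \<subseteq> VG \<and> connected_set EG (\<phi> v)) \<and>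
     (\<forall>v\<in>VH. \<forall>w\<in>VH. v \<noteq> w \<longrightarrow> \<phi> v \<inter> \<phi> w = {}) \<and>
     (\<forall>v w. {v, w} \<in> EH \<longrightarrow> (\<exists>x\<in>\<phi> v. \<exists>y\<in>\<phi> w. {x, y} \<in> EG)))"

definition in_Kst :: "nat \<Rightarrow> nat \<Rightarrow> 'b set \<Rightarrow> 'b set set \<Rightarrow> bool" where
  "in_Kst s t V E \<longleftrightarrow> graph V E \<and> (\<exists>A B. A \<inter> B = {} \<and> A \<union> B = V \<and> card A = s \<and> card B = t \<and>
     (\<forall>v\<in>A. \<forall>w\<in>B. {v, w} \<in> E) \<and> connected_set E B)"

text \<open>G has no minor in K_{s,t}. Since K_{s,t} is closed under isomorphism and its members
  are finite, it suffices to range over graphs with vertices in nat.\<close>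
definition no_Kst_minor :: "nat \<Rightarrow> nat \<Rightarrow> 'a set \<Rightarrow> 'a set set \<Rightarrow> bool" where
  "no_Kst_minor s t V E \<longleftrightarrow> \<not> (\<exists>(VH :: nat set) EH. in_Kst s t VH EH \<and> is_minor VH EH V E)"

end

theory Submission
  imports Defs
begin


definition mmap :: "'b set \<Rightarrow> 'b set set \<Rightarrow> 'a set \<Rightarrow> 'a set set \<Rightarrow> ('b \<Rightarrow> 'a set) \<Rightarrow> bool" where
 "mmap VH EH VG EG \<phi> \<longleftrightarrow> (\<forall>v\<in>VH. \<phi> v \<subseteq> VG \<and> connected_set EG (\<phi> v)) \<and>
     (\<forall>v\<in>VH. \<forall>w\<in>VH. v \<noteq> w \<longrightarrow> \<phi> v \<inter> \<phi> w = {}) \<and>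
     (\<forall>v w. {v, w} \<in> EH \<longrightarrow> (\<exists>x\<in>\<phi> v. \<exists>y\<in>\<phi> w. {x, y} \<in> EG))"

lemma is_minor_iff: "is_minor VH EH VG EG \<longleftrightarrow> (\<exists>\<phi>. mmap VH EH VG EG \<phi>)"
  by (simp add: is_minor_def mmap_def)

lemma rtp_mono:
  assumes "(\<lambda>x y. x \<in> X \<and> y \<in> X \<and> {x, y} \<in> E)\<^sup>*\<^sup>* u v" "X \<subseteq> Y" "E \<subseteq> F"
  shows "(\<lambda>x y. x \<in> Y \<and> y \<in> Y \<and> {x, y} \<in> F)\<^sup>*\<^sup>* u v"
  using assms(1)
proof (induction rule: rtranclp_induct)
  case base then show ?case by simp
next
  case (step y z)
  then show ?case using assms(2,3) by (metis (mono_tags, lifting) in_mono rtranclp.rtrancl_into_rtrancl)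
qed

lemma conn_mono_E: "connected_set E X \<Longrightarrow> E \<subseteq> F \<Longrightarrow> connected_set F X"
  unfolding connected_set_def using rtp_mono[of X E _ _ X F] by blast

lemma conn_single: "connected_set E {a}"
  unfolding connected_set_def by auto

lemma rtp_sym:
  assumes "(\<lambda>x y. x \<in> X \<and> y \<in> X \<and> {x, y} \<in> E)\<^sup>*\<^sup>* u v"
  shows "(\<lambda>x y. x \<in> X \<and> y \<in> X \<and> {x, y} \<in> E)\<^sup>*\<^sup>* v u"
  using assms
proof (induction rule: rtranclp_induct)
  case base then show ?case by simp
next
  case (step y z)
  have "(\<lambda>x y. x \<in> X \<and> y \<in> X \<and> {x, y} \<in> E) z y" using step(2) by (simp add: insert_commute)
  then show ?case using step(3) by (rule converse_rtranclp_into_rtranclp)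
qed

lemma conn_insert:
  assumes "connected_set E X" "u \<in> X" "{u, v} \<in> E"
  shows "connected_set E (insert v X)"
proof -
  let ?R = "\<lambda>x y. x \<in> insert v X \<and> y \<in> insert v X \<and> {x, y} \<in> E"
  have a: "?R\<^sup>*\<^sup>* x y" if "x \<in> X" "y \<in> X" for x y
    using assms(1) that unfolding connected_set_def using rtp_mono[of X E x y "insert v X" E] by blast
  have b: "?R\<^sup>*\<^sup>* x v" if "x \<in> X" for x
  proof -
    have "?R\<^sup>*\<^sup>* x u" using a that assms(2) by blast
    moreover have "?R u v" using assms by simp
    ultimately show ?thesis by (rule rtranclp.rtrancl_into_rtrancl)
  qed
  have c: "?R\<^sup>*\<^sup>* v x" if "x \<in> X" for x
    using rtp_sym[OF b[OF that]] .
  show ?thesis unfolding connected_set_def using a b c by auto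
qed

lemma mmapD:
  assumes "mmap VH EH VG EG \<phi>"
  shows mmap_sub: "\<And>v. v \<in> VH \<Longrightarrow> \<phi> v \<subseteq> VG"
    and mmap_conn: "\<And>v. v \<in> VH \<Longrightarrow> connected_set EG (\<phi> v)"
    and mmap_disj: "\<And>v w. v \<in> VH \<Longrightarrow> w \<in> VH \<Longrightarrow> v \<noteq> w \<Longrightarrow> \<phi> v \<inter> \<phi> w = {}"
    and mmap_edge: "\<And>v w. {v, w} \<in> EH \<Longrightarrow> \<exists>x\<in>\<phi> v. \<exists>y\<in>\<phi> w. {x, y} \<in> EG"
  using assms unfolding mmap_def by auto

lemma conn_ne: "connected_set E X \<Longrightarrow> X \<noteq> {}" unfolding connected_set_def by simp
lemma conn_path: "connected_set E X \<Longrightarrow> u \<in> X \<Longrightarrow> v \<in> X \<Longrightarrow> (\<lambda>x y. x \<in> X \<and> y \<in> X \<and> {x, y} \<in> E)\<^sup>*\<^sup>* u v"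
  unfolding connected_set_def by simp
lemma connI: "X \<noteq> {} \<Longrightarrow> (\<And>u v. u \<in> X \<Longrightarrow> v \<in> X \<Longrightarrow> (\<lambda>x y. x \<in> X \<and> y \<in> X \<and> {x, y} \<in> E)\<^sup>*\<^sup>* u v) \<Longrightarrow> connected_set E X"
  unfolding connected_set_def by simp

lemma mmap_compose:
  assumes f: "mmap VK EK VH EH \<phi>" and g: "mmap VH EH VG EG \<beta>"
  shows "mmap VK EK VG EG (\<lambda>k. \<Union>(\<beta> ` \<phi> k))"
proof -
  have phs: "\<phi> k \<subseteq> VH" if "k \<in> VK" for k using mmap_sub[OF f that] .
  have conn: "connected_set EG (\<Union>(\<beta> ` \<phi> k))" if k: "k \<in> VK" for k
  proof -
    let ?X = "\<Union>(\<beta> ` \<phi> k)"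
    let ?R = "\<lambda>x y. x \<in> ?X \<and> y \<in> ?X \<and> {x, y} \<in> EG"
    have bc: "?R\<^sup>*\<^sup>* u w" if "a \<in> \<phi> k" "u \<in> \<beta> a" "w \<in> \<beta> a" for a u w
    proof -
      have aH: "a \<in> VH" using phs[OF k] that(1) by blast
      have "(\<lambda>x y. x \<in> \<beta> a \<and> y \<in> \<beta> a \<and> {x, y} \<in> EG)\<^sup>*\<^sup>* u w"
        using conn_path[OF mmap_conn[OF g aH] that(2,3)] .
      then show ?thesis by (rule rtp_mono) (use that in auto)
    qed
    have main: "\<forall>u\<in>\<beta> a. \<forall>w\<in>\<beta> a'. ?R\<^sup>*\<^sup>* u w"
      if "(\<lambda>x y. x \<in> \<phi> k \<and> y \<in> \<phi> k \<and> {x, y} \<in> EH)\<^sup>*\<^sup>* a a'" "a \<in> \<phi> k" for a a'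
      using that(1)
    proof (induction rule: rtranclp_induct)
      case base then show ?case using bc that(2) by blast
    next
      case (step y z)
      obtain p q where pq: "p \<in> \<beta> y" "q \<in> \<beta> z" "{p, q} \<in> EG" using mmap_edge[OF g] step(2) by blast
      show ?case
      proof (intro ballI)
        fix u w assume u: "u \<in> \<beta> a" and w: "w \<in> \<beta> z"
        have 1: "?R\<^sup>*\<^sup>* u p" using step(3) u pq(1) by blast
        have 2: "?R p q" using pq step(2) by blast
        have 3: "?R\<^sup>*\<^sup>* q w" using bc[of z q w] step(2) pq(2) w by blast
        have "?R\<^sup>*\<^sup>* u q" using 1 2 by (rule rtranclp.rtrancl_into_rtrancl)
        then show "?R\<^sup>*\<^sup>* u w" using 3 by (rule rtranclp_trans)
      qed
    qed
    have ne: "\<phi> k \<noteq> {}" using conn_ne[OF mmap_conn[OF f k]] .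
    have bne: "\<beta> a \<noteq> {}" if "a \<in> \<phi> k" for a using conn_ne[OF mmap_conn[OF g]] phs[OF k] that by blast
    show ?thesis
    proof (rule connI)
      show "?X \<noteq> {}" using ne bne by blast
      fix u w assume "u \<in> ?X" "w \<in> ?X"
      then obtain a a' where aa: "a \<in> \<phi> k" "a' \<in> \<phi> k" "u \<in> \<beta> a" "w \<in> \<beta> a'" by blast
      have "(\<lambda>x y. x \<in> \<phi> k \<and> y \<in> \<phi> k \<and> {x, y} \<in> EH)\<^sup>*\<^sup>* a a'"
        using conn_path[OF mmap_conn[OF f k] aa(1,2)] .
      then show "?R\<^sup>*\<^sup>* u w" using main aa by blast
    qed
  qed
  have sub: "\<Union>(\<beta> ` \<phi> k) \<subseteq> VG" if "k \<in> VK" for k using mmap_sub[OF g] phs[OF that] by blast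
  have disj: "\<Union>(\<beta> ` \<phi> k) \<inter> \<Union>(\<beta> ` \<phi> k') = {}" if "k \<in> VK" "k' \<in> VK" "k \<noteq> k'" for k k'
  proof -
    have d: "\<phi> k \<inter> \<phi> k' = {}" using mmap_disj[OF f that] .
    show ?thesis
    proof (rule ccontr)
      assume "\<not> ?thesis"
      then obtain x a a' where xa: "a \<in> \<phi> k" "a' \<in> \<phi> k'" "x \<in> \<beta> a" "x \<in> \<beta> a'" by blast
      have "a \<noteq> a'" using d xa by blast
      moreover have "a \<in> VH" "a' \<in> VH" using phs that xa by blast+
      ultimately have "\<beta> a \<inter> \<beta> a' = {}" using mmap_disj[OF g] by blast
      then show False using xa by blast
    qed
  qed
  have edg: "\<exists>x\<in>\<Union>(\<beta> ` \<phi> v). \<exists>y\<in>\<Union>(\<beta> ` \<phi> w). {x, y} \<in> EG" if vw: "{v, w} \<in> EK" for v w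
  proof -
    obtain p q where pq: "p \<in> \<phi> v" "q \<in> \<phi> w" "{p, q} \<in> EH" using mmap_edge[OF f vw] by blast
    obtain x y where "x \<in> \<beta> p" "y \<in> \<beta> q" "{x, y} \<in> EG" using mmap_edge[OF g pq(3)] by blast
    then show ?thesis using pq by blast
  qed
  show ?thesis unfolding mmap_def using conn sub disj edg by simp
qed



definition Kr :: "nat \<Rightarrow> nat set set" where
  "Kr r = {{i, j} | i j. i < r \<and> j < r \<and> i \<noteq> j}"

lemma Kr_mem: "{i, j} \<in> Kr r \<longleftrightarrow> i < r \<and> j < r \<and> i \<noteq> j"
  unfolding Kr_def by (auto simp: doubleton_eq_iff)

lemma in_Kst_Kr:
  assumes "t \<ge> 1"
  shows "in_Kst s t {0..<s+t} (Kr (s+t))"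
proof -
  have g: "graph {0..<s+t} (Kr (s+t))" unfolding graph_def Kr_def by auto
  have c: "connected_set (Kr (s+t)) {s..<s+t}"
  proof (rule connI)
    show "{s..<s+t} \<noteq> {}" using assms by simp
    fix u v assume uv: "u \<in> {s..<s+t}" "v \<in> {s..<s+t}"
    show "(\<lambda>x y. x \<in> {s..<s+t} \<and> y \<in> {s..<s+t} \<and> {x, y} \<in> Kr (s+t))\<^sup>*\<^sup>* u v"
    proof (cases "u = v")
      case True then show ?thesis by simp
    next
      case False
      then have "{u, v} \<in> Kr (s+t)" using uv by (simp add: Kr_mem)
      then show ?thesis using uv by (intro r_into_rtranclp) simp
    qed
  qed
  show ?thesis unfolding in_Kst_def
    apply (rule conjI[OF g])
    apply (rule exI[of _ "{0..<s}"], rule exI[of _ "{s..<s+t}"])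
    using c by (auto simp: Kr_mem)
qed

lemma Kr_model_not_free:
  assumes "mmap {0..<s+t} (Kr (s+t)) V E \<phi>" "t \<ge> 1"
  shows "\<not> no_Kst_minor s t V E"
  unfolding no_Kst_minor_def using in_Kst_Kr[OF assms(2)] assms(1) is_minor_iff by blast

lemma pair_fib_fin: "finite {(a, b). {a, b} = (e::'a set)} \<and> card {(a, b). {a, b} = e} \<le> 2"
proof (cases "\<exists>u v. e = {u, v}")
  case True
  then obtain u v where e: "e = {u, v}" by blast
  have s: "{(a, b). {a, b} = e} \<subseteq> {(u, v), (v, u)}"
  proof (rule subsetI)
    fix p assume "p \<in> {(a, b). {a, b} = e}"
    then obtain a b where p: "p = (a, b)" "{a, b} = {u, v}" using e by blast
    then have "(a = u \<and> b = v) \<or> (a = v \<and> b = u)" by (simp add: doubleton_eq_iff)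
    then show "p \<in> {(u, v), (v, u)}" using p by blast
  qed
  have "card {(a, b). {a, b} = e} \<le> card {(u, v), (v, u)}" using s by (intro card_mono) simp_all
  also have "\<dots> \<le> 2" by (rule card_insert_le_m1) auto
  finally have c: "card {(a, b). {a, b} = e} \<le> 2" .
  have "finite {(a, b). {a, b} = e}" using s by (rule finite_subset) simp
  then show ?thesis using c by blast
next
  case False
  have "{(a, b). {a, b} = e} = {}"
  proof (rule equals0I)
    fix p assume "p \<in> {(a, b). {a, b} = e}"
    then obtain a b where "{a, b} = e" by blast
    then show False using False by blast
  qed
  then show ?thesis by simp
qed

lemma pairs_le:
  assumes "finite F"
  shows "finite {(a, b). {a, b} \<in> F} \<and> card {(a, b). {a, b} \<in> F} \<le> 2 * card F"
proof -
  have sub: "{(a, b). {a, b} \<in> F} \<subseteq> (\<Union>e\<in>F. {(a, b). {a, b} = e})" by auto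
  have fU: "finite (\<Union>e\<in>F. {(a, b). {a, b} = e})" using assms pair_fib_fin by (intro finite_UN_I) blast+
  have "card {(a, b). {a, b} \<in> F} \<le> card (\<Union>e\<in>F. {(a, b). {a, b} = e})"
    using sub fU by (intro card_mono)
  also have "\<dots> \<le> (\<Sum>e\<in>F. card {(a, b). {a, b} = e})" by (rule card_UN_le[OF assms])
  also have "\<dots> \<le> (\<Sum>e\<in>F. 2)" by (rule sum_mono) (use pair_fib_fin in blast)
  moreover have "finite {(a, b). {a, b} \<in> F}" using sub fU by (rule finite_subset)
  ultimately show ?thesis by simp
qed

lemma degsum_le:
  assumes "finite F" "finite W"
  shows "(\<Sum>a\<in>W. card {b \<in> W. {a, b} \<in> F}) \<le> 2 * card F"
proof -
  have "(\<Sum>a\<in>W. card {b \<in> W. {a, b} \<in> F}) = card (SIGMA a:W. {b \<in> W. {a, b} \<in> F})"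
    using assms(2) by (subst card_SigmaI) auto
  also have "\<dots> \<le> card {(a, b). {a, b} \<in> F}"
    using pairs_le[OF assms(1)] by (intro card_mono) auto
  also have "\<dots> \<le> 2 * card F" using pairs_le[OF assms(1)] by simp
  finally show ?thesis .
qed



lemma graph_edge: "graph V E \<Longrightarrow> e \<in> E \<Longrightarrow> \<exists>u v. e = {u, v} \<and> u \<noteq> v \<and> u \<in> V \<and> v \<in> V"
  unfolding graph_def by blast

lemma graph_finE: "graph V E \<Longrightarrow> finite E"
proof -
  assume g: "graph V E"
  have "E \<subseteq> Pow V" using graph_edge[OF g] by blast
  moreover have "finite V" using g unfolding graph_def by simp
  ultimately show "finite E" by (meson finite_Pow_iff finite_subset)
qed

lemma graph_finV: "graph V E \<Longrightarrow> finite V" unfolding graph_def by simp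

lemma graph_noloop: "graph V E \<Longrightarrow> {x, x} \<notin> E"
  using graph_edge[of V E "{x,x}"] by (auto simp: doubleton_eq_iff)

lemma graph_ends: "graph V E \<Longrightarrow> {x, y} \<in> E \<Longrightarrow> x \<in> V \<and> y \<in> V \<and> x \<noteq> y"
proof -
  assume g: "graph V E" and e: "{x, y} \<in> E"
  obtain u v where "{x, y} = {u, v}" "u \<noteq> v" "u \<in> V" "v \<in> V" using graph_edge[OF g e] by blast
  then show ?thesis by (auto simp: doubleton_eq_iff)
qed

definition contrf :: "'a \<Rightarrow> 'a \<Rightarrow> 'a set \<Rightarrow> 'a set" where
  "contrf x y e = (if y \<in> e then insert x (e - {y}) else e)"

definition contr :: "'a \<Rightarrow> 'a \<Rightarrow> 'a set set \<Rightarrow> 'a set set" where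
  "contr x y E = contrf x y ` (E - {{x, y}})"

definition cmap :: "'a \<Rightarrow> 'a \<Rightarrow> 'a \<Rightarrow> 'a set" where
  "cmap x y v = (if v = x then {x, y} else {v})"

lemma contr_cases:
  assumes g: "graph V E" and e: "e \<in> E - {{x, y}}"
  shows "(y \<notin> e \<and> contrf x y e = e) \<or> (\<exists>z. e = {y, z} \<and> z \<noteq> y \<and> z \<noteq> x \<and> z \<in> V \<and> contrf x y e = {x, z})"
proof (cases "y \<in> e")
  case False then show ?thesis by (simp add: contrf_def)
next
  case True
  obtain u v where uv: "e = {u, v}" "u \<noteq> v" "u \<in> V" "v \<in> V" using graph_edge[OF g] e by blast
  obtain z where z: "e = {y, z}" "z \<noteq> y" "z \<in> V" using True uv by (auto simp: insert_commute)
  have "z \<noteq> x" using z e by (auto simp: insert_commute)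
  moreover have "contrf x y e = {x, z}" using True z by (auto simp: contrf_def)
  ultimately show ?thesis using z by blast
qed

lemma contr_graph:
  assumes g: "graph V E" and xy: "{x, y} \<in> E"
  shows "graph (V - {y}) (contr x y E)"
proof -
  have xV: "x \<in> V" "x \<noteq> y" using graph_ends[OF g xy] by auto
  show ?thesis unfolding graph_def
  proof (intro conjI ballI)
    show "finite (V - {y})" using graph_finV[OF g] by simp
    fix e' assume "e' \<in> contr x y E"
    then obtain e where e: "e \<in> E - {{x, y}}" "e' = contrf x y e" unfolding contr_def by blast
    from contr_cases[OF g e(1)] show "\<exists>u v. e' = {u, v} \<and> u \<noteq> v \<and> u \<in> V - {y} \<and> v \<in> V - {y}"
    proof
      assume a: "y \<notin> e \<and> contrf x y e = e"
      obtain u v where uv: "e = {u, v}" "u \<noteq> v" "u \<in> V" "v \<in> V" using graph_edge[OF g] e by blast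
      then show ?thesis using a e by auto
    next
      assume "\<exists>z. e = {y, z} \<and> z \<noteq> y \<and> z \<noteq> x \<and> z \<in> V \<and> contrf x y e = {x, z}"
      then obtain z where z: "z \<noteq> y" "z \<noteq> x" "z \<in> V" "contrf x y e = {x, z}" by blast
      have "e' = {x, z} \<and> x \<noteq> z \<and> x \<in> V - {y} \<and> z \<in> V - {y}" using z e(2) xV by auto
      then show ?thesis by blast
    qed
  qed
qed

lemma contr_card_le:
  assumes "finite E" "{x, y} \<in> E"
  shows "card (contr x y E) + 1 \<le> card E"
proof -
  have 1: "card (contr x y E) \<le> card (E - {{x, y}})" unfolding contr_def
    by (rule card_image_le) (simp add: assms(1))
  have 2: "card (E - {{x, y}}) = card E - 1" using assms by (simp add: card_Diff_singleton)
  have 3: "card E > 0" using assms by (auto simp: card_gt_0_iff)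
  show ?thesis using 1 2 3 by linarith
qed

lemma contr_card_ge:
  assumes g: "graph V E" and xy: "{x, y} \<in> E"
  shows "card E \<le> card (contr x y E) + 1 + card {z. {x, z} \<in> E \<and> {y, z} \<in> E}"
proof -
  let ?CN = "{z. {x, z} \<in> E \<and> {y, z} \<in> E}"
  let ?D = "E - {{x, y}} - (\<lambda>z. {y, z}) ` ?CN"
  have fE: "finite E" using graph_finE[OF g] .
  have CNV: "?CN \<subseteq> V"
  proof
    fix z assume "z \<in> ?CN"
    then have "{x, z} \<in> E" by simp
    then show "z \<in> V" using graph_ends[OF g] by blast
  qed
  have fCN: "finite ?CN" using finite_subset[OF CNV graph_finV[OF g]] .
  have noCN: "{x, z} \<notin> E" if "e \<in> ?D" "e = {y, z}" for z e
  proof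
    assume "{x, z} \<in> E"
    moreover have "{y, z} \<in> E" using that by simp
    ultimately have "z \<in> ?CN" by simp
    then have "e \<in> (\<lambda>z. {y, z}) ` ?CN" using that(2) by (rule rev_image_eqI)
    then show False using that(1) by simp
  qed
  have inj: "inj_on (contrf x y) ?D"
  proof (rule inj_onI)
    fix e1 e2 assume e1: "e1 \<in> ?D" and e2: "e2 \<in> ?D" and eq: "contrf x y e1 = contrf x y e2"
    have e1': "e1 \<in> E - {{x, y}}" and e2': "e2 \<in> E - {{x, y}}" using e1 e2 by auto
    show "e1 = e2"
      using contr_cases[OF g e1'] contr_cases[OF g e2']
    proof (elim disjE exE conjE)
      assume "contrf x y e1 = e1" "contrf x y e2 = e2" then show ?thesis using eq by metis
    next
      fix z assume a: "contrf x y e1 = e1" "e2 = {y, z}" "contrf x y e2 = {x, z}"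
      have "{x, z} = e1" using a(1,3) eq by simp
      then have "{x, z} \<in> E" using e1' by simp
      then show ?thesis using noCN[OF e2 a(2)] by simp
    next
      fix z assume a: "e1 = {y, z}" "contrf x y e1 = {x, z}" "contrf x y e2 = e2"
      have "{x, z} = e2" using a(2,3) eq by simp
      then have "{x, z} \<in> E" using e2' by simp
      then show ?thesis using noCN[OF e1 a(1)] by simp
    next
      fix z z' assume a: "e1 = {y, z}" "z \<noteq> x" "contrf x y e1 = {x, z}"
         "e2 = {y, z'}" "z' \<noteq> x" "contrf x y e2 = {x, z'}"
      have "{x, z} = {x, z'}" using a(3,6) eq by simp
      then have "z = z'" using a(2,5) by (simp add: doubleton_eq_iff)
      then show ?thesis using a(1,4) by simp
    qed
  qed
  have cD: "card ?D \<le> card (contr x y E)"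
  proof -
    have "card ?D = card (contrf x y ` ?D)" using card_image[OF inj] by simp
    also have "\<dots> \<le> card (contr x y E)" unfolding contr_def
      by (rule card_mono) (simp_all add: fE image_mono Diff_subset)
    finally show ?thesis .
  qed
  have sub: "E \<subseteq> (?D \<union> {{x, y}}) \<union> (\<lambda>z. {y, z}) ` ?CN"
  proof
    fix e assume "e \<in> E"
    then show "e \<in> (?D \<union> {{x, y}}) \<union> (\<lambda>z. {y, z}) ` ?CN" by (cases "e = {x, y}") auto
  qed
  have f1: "card E \<le> card ((?D \<union> {{x, y}}) \<union> (\<lambda>z. {y, z}) ` ?CN)"
    using sub by (rule card_mono[rotated]) (simp add: fE fCN)
  have f2: "card ((?D \<union> {{x, y}}) \<union> (\<lambda>z. {y, z}) ` ?CN) \<le> card (?D \<union> {{x, y}}) + card ((\<lambda>z. {y, z}) ` ?CN)"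
    by (rule card_Un_le)
  have f3: "card (?D \<union> {{x, y}}) \<le> card ?D + card {{x, y}}" by (rule card_Un_le)
  have f4: "card ((\<lambda>z. {y, z}) ` ?CN) \<le> card ?CN" by (rule card_image_le[OF fCN])
  have f5: "card {{x, y}} = 1" by simp
  show ?thesis using f1 f2 f3 f4 f5 cD by linarith
qed

lemma cmap_mmap:
  assumes g: "graph V E" and xy: "{x, y} \<in> E"
  shows "mmap (V - {y}) (contr x y E) V E (cmap x y)"
proof -
  have xV: "x \<in> V" "y \<in> V" "x \<noteq> y" using graph_ends[OF g xy] by auto
  have self: "v \<in> cmap x y v" for v by (simp add: cmap_def)
  show ?thesis unfolding mmap_def
  proof (intro conjI ballI allI impI)
    fix v assume v: "v \<in> V - {y}"
    show "cmap x y v \<subseteq> V" using v xV by (auto simp: cmap_def)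
    show "connected_set E (cmap x y v)"
    proof (cases "v = x")
      case True
      have "connected_set E (insert y {x})" by (rule conn_insert[OF conn_single _ xy]) simp
      then show ?thesis using True by (simp add: cmap_def insert_commute)
    next
      case False then show ?thesis by (simp add: cmap_def conn_single)
    qed
  next
    fix v w assume "v \<in> V - {y}" "w \<in> V - {y}" "v \<noteq> w"
    then show "cmap x y v \<inter> cmap x y w = {}" by (auto simp: cmap_def)
  next
    fix v w assume vw: "{v, w} \<in> contr x y E"
    then obtain e where e: "e \<in> E - {{x, y}}" "{v, w} = contrf x y e" unfolding contr_def by blast
    from contr_cases[OF g e(1)] show "\<exists>p\<in>cmap x y v. \<exists>q\<in>cmap x y w. {p, q} \<in> E"
    proof
      assume "y \<notin> e \<and> contrf x y e = e"
      then have "{v, w} \<in> E" using e by simp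
      then show ?thesis using self by blast
    next
      assume "\<exists>z. e = {y, z} \<and> z \<noteq> y \<and> z \<noteq> x \<and> z \<in> V \<and> contrf x y e = {x, z}"
      then obtain z where z: "e = {y, z}" "contrf x y e = {x, z}" by blast
      have yz: "{y, z} \<in> E" "{z, y} \<in> E" using z e by (auto simp: insert_commute)
      have yx: "y \<in> cmap x y x" by (simp add: cmap_def)
      have "(v = x \<and> w = z) \<or> (v = z \<and> w = x)" using e(2) z(2) by (auto simp: doubleton_eq_iff)
      then show ?thesis using yz yx self by blast
    qed
  qed
qed

lemma extend_model:
  assumes g: "graph V E" and xV: "x \<in> V"
    and m: "mmap {0..<r} (Kr r) {z. {x, z} \<in> E} EN \<phi>" and EN: "EN \<subseteq> E"
  shows "mmap {0..<Suc r} (Kr (Suc r)) V E (\<phi>(r := {x}))"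
proof -
  let ?N = "{z. {x, z} \<in> E}"
  have NV: "?N \<subseteq> V" using graph_ends[OF g] by blast
  have xN: "x \<notin> ?N" using graph_noloop[OF g] by blast
  show ?thesis unfolding mmap_def
  proof (intro conjI ballI allI impI)
    fix v assume v: "v \<in> {0..<Suc r}"
    show "(\<phi>(r := {x})) v \<subseteq> V"
      using mmap_sub[OF m, of v] v NV xV by (cases "v = r") auto
    show "connected_set E ((\<phi>(r := {x})) v)"
      using mmap_conn[OF m, of v] v conn_mono_E[OF _ EN] conn_single by (cases "v = r") auto
  next
    fix v w assume v: "v \<in> {0..<Suc r}" and w: "w \<in> {0..<Suc r}" and vw: "v \<noteq> w"
    show "(\<phi>(r := {x})) v \<inter> (\<phi>(r := {x})) w = {}"
    proof (cases "v = r \<or> w = r")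
      case True
      then show ?thesis
      proof
        assume vr: "v = r"
        then have "w \<in> {0..<r}" using w vw by auto
        then show ?thesis using mmap_sub[OF m, of w] vr vw xN by auto
      next
        assume wr: "w = r"
        then have "v \<in> {0..<r}" using v vw by auto
        then show ?thesis using mmap_sub[OF m, of v] wr vw xN by auto
      qed
    next
      case False
      then show ?thesis using mmap_disj[OF m, of v w] v w vw by auto
    qed
  next
    fix v w assume vw: "{v, w} \<in> Kr (Suc r)"
    then have vw': "v < Suc r" "w < Suc r" "v \<noteq> w" by (auto simp: Kr_mem)
    show "\<exists>p\<in>(\<phi>(r := {x})) v. \<exists>q\<in>(\<phi>(r := {x})) w. {p, q} \<in> E"
    proof (cases "v = r")
      case True
      then have wr: "w < r" using vw' by auto
      obtain q where "q \<in> \<phi> w" using conn_ne[OF mmap_conn[OF m, of w]] wr by auto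
      then have "q \<in> ?N" "q \<in> (\<phi>(r := {x})) w" using mmap_sub[OF m, of w] wr by auto
      then show ?thesis using True by auto
    next
      case False
      show ?thesis
      proof (cases "w = r")
        case True
        then have vr: "v < r" using vw' False by auto
        obtain q where "q \<in> \<phi> v" using conn_ne[OF mmap_conn[OF m, of v]] vr by auto
        then have "q \<in> ?N" "q \<in> (\<phi>(r := {x})) v" using mmap_sub[OF m, of v] vr False by auto
        then show ?thesis using True by (auto simp: insert_commute)
      next
        case False2: False
        then have "{v, w} \<in> Kr r" using vw' False by (simp add: Kr_mem)
        then obtain p q where "p \<in> \<phi> v" "q \<in> \<phi> w" "{p, q} \<in> EN" using mmap_edge[OF m] by blast
        then show ?thesis using False False2 EN by auto
      qed
    qed
  qed
qed



lemma Kr0: "Kr 0 = {}" unfolding Kr_def by simp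

lemma mader:
  "graph V E \<Longrightarrow> V \<noteq> {} \<Longrightarrow> 2 ^ r * card V \<le> card E \<Longrightarrow> \<exists>\<phi>. mmap {0..<r} (Kr r) V E \<phi>"
proof (induction r arbitrary: V E)
  case 0
  show ?case by (rule exI[of _ "\<lambda>_. {}"]) (simp add: mmap_def Kr0)
next
  case (Suc r)
  note IHr = Suc.IH
  let ?c = "2 ^ Suc r :: nat"
  have main: "\<forall>(V::'a set) E. card V + card E = n \<longrightarrow> graph V E \<longrightarrow> V \<noteq> {} \<longrightarrow> ?c * card V \<le> card E
      \<longrightarrow> (\<exists>\<phi>. mmap {0..<Suc r} (Kr (Suc r)) V E \<phi>)" for n
  proof (induction n rule: less_induct)
    case (less n)
    show ?case
    proof (intro allI impI)
      fix V :: "'a set" and E assume n: "card V + card E = n" and g: "graph V E" and ne: "V \<noteq> {}"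
        and dens: "?c * card V \<le> card E"
      have fV: "finite V" using graph_finV[OF g] .
      have fE: "finite E" using graph_finE[OF g] .
      have cV: "card V \<ge> 1" using fV ne by (simp add: Suc_le_eq card_gt_0_iff)
      have "?c * 1 \<le> ?c * card V" using cV by (rule mult_le_mono2)
      moreover have "(1::nat) \<le> 2 ^ r" by simp
      moreover have "?c = 2 * 2 ^ r" by simp
      ultimately have "card E \<ge> 2" using dens by linarith
      then have "E \<noteq> {}" by auto
      then obtain e where e: "e \<in> E" by blast
      obtain x0 y0 where xy0: "e = {x0, y0}" "x0 \<noteq> y0" using graph_edge[OF g e] by blast
      show "\<exists>\<phi>. mmap {0..<Suc r} (Kr (Suc r)) V E \<phi>"
      proof (cases "\<exists>x y. {x, y} \<in> E \<and> ?c * card (V - {y}) \<le> card (contr x y E)")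
        case True
        then obtain x y where xy: "{x, y} \<in> E" and d2: "?c * card (V - {y}) \<le> card (contr x y E)" by blast
        have xyV: "x \<in> V" "y \<in> V" "x \<noteq> y" using graph_ends[OF g xy] by auto
        have g2: "graph (V - {y}) (contr x y E)" by (rule contr_graph[OF g xy])
        have ne2: "V - {y} \<noteq> {}" using xyV by auto
        have "card (contr x y E) + 1 \<le> card E" by (rule contr_card_le[OF fE xy])
        moreover have "card (V - {y}) < card V" using xyV fV by (intro card_Diff1_less)
        ultimately have lt: "card (V - {y}) + card (contr x y E) < n" using n by linarith
        have "\<exists>\<phi>. mmap {0..<Suc r} (Kr (Suc r)) (V - {y}) (contr x y E) \<phi>"
          using less.IH[OF lt, rule_format, of "V - {y}" "contr x y E", OF refl g2 ne2 d2] .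
        then obtain \<phi> where "mmap {0..<Suc r} (Kr (Suc r)) (V - {y}) (contr x y E) \<phi>" by blast
        from mmap_compose[OF this cmap_mmap[OF g xy]] show ?thesis by blast
      next
        case False
        have cn: "?c \<le> card {z. {x0, z} \<in> E \<and> {y, z} \<in> E}" if xy: "{x0, y} \<in> E" for y
        proof -
          have y: "y \<in> V" "x0 \<noteq> y" using graph_ends[OF g xy] by auto
          have 1: "card (contr x0 y E) < ?c * card (V - {y})" using False xy by (meson not_le)
          have 2: "card (V - {y}) = card V - 1" using y by simp
          have 3: "card E \<le> card (contr x0 y E) + 1 + card {z. {x0, z} \<in> E \<and> {y, z} \<in> E}"
            by (rule contr_card_ge[OF g xy])
          have 4: "?c * (card V - 1) + ?c = ?c * card V"
          proof -
            obtain k where k: "card V = Suc k" using cV by (cases "card V") auto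
            show ?thesis unfolding k by simp
          qed
          have 5: "card (contr x0 y E) < ?c * (card V - 1)" using 1 unfolding 2 .
          show ?thesis using 5 3 4 dens by linarith
        qed
        let ?N = "{z. {x0, z} \<in> E}"
        let ?EN = "{e \<in> E. e \<subseteq> ?N}"
        have NV: "?N \<subseteq> V" using graph_ends[OF g] by blast
        have fN: "finite ?N" using finite_subset[OF NV fV] .
        have gN: "graph ?N ?EN" unfolding graph_def
        proof (intro conjI ballI)
          show "finite ?N" by (rule fN)
          fix e assume e: "e \<in> ?EN"
          obtain u v where "e = {u, v}" "u \<noteq> v" using graph_edge[OF g] e by blast
          then show "\<exists>u v. e = {u, v} \<and> u \<noteq> v \<and> u \<in> ?N \<and> v \<in> ?N" using e by blast
        qed
        have y0N: "y0 \<in> ?N" using e xy0 by simp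
        then have neN: "?N \<noteq> {}" by blast
        have deg: "?c \<le> card {w \<in> ?N. {z, w} \<in> ?EN}" if z: "z \<in> ?N" for z
        proof -
          have "{w. {x0, w} \<in> E \<and> {z, w} \<in> E} \<subseteq> {w \<in> ?N. {z, w} \<in> ?EN}" using z by auto
          then have "card {w. {x0, w} \<in> E \<and> {z, w} \<in> E} \<le> card {w \<in> ?N. {z, w} \<in> ?EN}"
            using fN by (intro card_mono) auto
          moreover have "?c \<le> card {w. {x0, w} \<in> E \<and> {z, w} \<in> E}" using cn z by simp
          ultimately show ?thesis by linarith
        qed
        have "(\<Sum>z\<in>?N. ?c) \<le> (\<Sum>z\<in>?N. card {w \<in> ?N. {z, w} \<in> ?EN})"
          by (rule sum_mono) (rule deg)
        also have "\<dots> \<le> 2 * card ?EN" by (rule degsum_le) (use fE fN in auto)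
        finally have "?c * card ?N \<le> 2 * card ?EN" by (simp add: mult.commute)
        then have dN: "2 ^ r * card ?N \<le> card ?EN" by simp
        obtain \<phi> where m: "mmap {0..<r} (Kr r) ?N ?EN \<phi>" using IHr[OF gN neN dN] by blast
        have x0V: "x0 \<in> V" using graph_ends[OF g] e xy0 by blast
        show ?thesis using extend_model[OF g x0V m] by blast
      qed
    qed
  qed
  then show ?case using Suc.prems by blast
qed



lemma minor_density:
  assumes nf: "no_Kst_minor s t V E" and t: "t \<ge> 1" and gH: "graph VH EH" and m: "mmap VH EH V E \<beta>"
  shows "card EH \<le> 2 ^ (s + t) * card VH"
proof (rule ccontr)
  assume nt: "\<not> ?thesis"
  then have d: "2 ^ (s + t) * card VH \<le> card EH" by simp
  have ne: "VH \<noteq> {}"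
  proof
    assume "VH = {}"
    then have "EH = {}" using graph_edge[OF gH] by blast
    then show False using nt by simp
  qed
  obtain \<phi> where "mmap {0..<s+t} (Kr (s+t)) VH EH \<phi>" using mader[OF gH ne d] by blast
  from mmap_compose[OF this m] have "\<exists>\<psi>. mmap {0..<s+t} (Kr (s+t)) V E \<psi>" by blast
  then show False using Kr_model_not_free[OF _ t] nf by blast
qed

lemma cross:
  assumes "R\<^sup>*\<^sup>* u w" "u \<in> U" "w \<notin> U"
  shows "\<exists>x y. R x y \<and> x \<in> U \<and> y \<notin> U"
  using assms
proof (induction rule: rtranclp_induct)
  case base then show ?case by simp
next
  case (step y z)
  show ?case
  proof (cases "y \<in> U")
    case True then show ?thesis using step by blast
  next
    case False then show ?thesis using step by blast
  qed
qed

lemma grow: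
  fixes P :: "nat \<Rightarrow> 'a set"
  assumes cB: "connected_set E B" and fB: "finite B" and t: "t \<ge> 1"
    and P: "\<forall>i<t. P i \<subseteq> B \<and> connected_set E (P i)"
    and Pd: "\<forall>i<t. \<forall>j<t. i \<noteq> j \<longrightarrow> P i \<inter> P j = {}"
  shows "\<exists>Q. (\<forall>i<t. P i \<subseteq> Q i \<and> Q i \<subseteq> B \<and> connected_set E (Q i)) \<and>
             (\<forall>i<t. \<forall>j<t. i \<noteq> j \<longrightarrow> Q i \<inter> Q j = {}) \<and> (\<Union>i<t. Q i) = B"
  using P Pd
proof (induction "card (B - (\<Union>i<t. P i))" arbitrary: P rule: less_induct)
  case less
  let ?U = "\<Union>i<t. P i"
  have UB: "?U \<subseteq> B" using less.prems(1) by blast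
  show ?case
  proof (cases "?U = B")
    case True
    then show ?thesis using less.prems by (intro exI[of _ P]) blast
  next
    case False
    then obtain w where w: "w \<in> B" "w \<notin> ?U" using UB by blast
    obtain u where u: "u \<in> P 0" using conn_ne less.prems(1) t by fastforce
    have uU: "u \<in> ?U" using u t by auto
    have uB: "u \<in> B" using uU UB by blast
    have "(\<lambda>x y. x \<in> B \<and> y \<in> B \<and> {x, y} \<in> E)\<^sup>*\<^sup>* u w" using conn_path[OF cB uB w(1)] .
    from cross[OF this uU w(2)] obtain x v where xv: "x \<in> B" "v \<in> B" "{x, v} \<in> E" "x \<in> ?U" "v \<notin> ?U"
      by blast
    then obtain i where i: "i < t" "x \<in> P i" by blast
    define P' where "P' = P(i := insert v (P i))"
    have P'1: "\<forall>k<t. P' k \<subseteq> B \<and> connected_set E (P' k)"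
    proof (intro allI impI)
      fix k assume k: "k < t"
      show "P' k \<subseteq> B \<and> connected_set E (P' k)"
      proof (cases "k = i")
        case True
        have Pi: "P i \<subseteq> B" "connected_set E (P i)" using less.prems(1) i(1) by auto
        have "connected_set E (insert v (P i))" by (rule conn_insert[OF Pi(2) i(2) xv(3)])
        moreover have "insert v (P i) \<subseteq> B" using Pi(1) xv(2) by blast
        moreover have "P' k = insert v (P i)" using True unfolding P'_def by simp
        ultimately show ?thesis by simp
      next
        case False
        have "P' k = P k" using False unfolding P'_def by simp
        moreover have "P k \<subseteq> B" "connected_set E (P k)" using less.prems(1) k by auto
        ultimately show ?thesis by simp
      qed
    qed
    have P'2: "\<forall>k<t. \<forall>j<t. k \<noteq> j \<longrightarrow> P' k \<inter> P' j = {}"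
    proof (intro allI impI)
      fix k j assume kj: "k < t" "j < t" "k \<noteq> j"
      have vk: "v \<notin> P k" and vj: "v \<notin> P j" using xv(5) kj by auto
      show "P' k \<inter> P' j = {}" using less.prems(2) kj vk vj unfolding P'_def by auto
    qed
    have U': "(\<Union>k<t. P' k) = insert v ?U"
    proof
      show "(\<Union>k<t. P' k) \<subseteq> insert v ?U" unfolding P'_def by auto
      show "insert v ?U \<subseteq> (\<Union>k<t. P' k)"
      proof
        fix z assume "z \<in> insert v ?U"
        then show "z \<in> (\<Union>k<t. P' k)"
        proof
          assume "z = v" then show ?thesis using i unfolding P'_def by auto
        next
          assume "z \<in> ?U"
          then obtain k where "k < t" "z \<in> P k" by blast
          then show ?thesis unfolding P'_def by (cases "k = i") auto
        qed
      qed
    qed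
    have lt: "card (B - (\<Union>k<t. P' k)) < card (B - ?U)"
    proof -
      have eq: "B - (\<Union>k<t. P' k) = (B - ?U) - {v}" using U' by auto
      have vBU: "v \<in> B - ?U" using xv by auto
      have "card ((B - ?U) - {v}) < card (B - ?U)" by (rule card_Diff1_less[OF finite_Diff[OF fB] vBU])
      then show ?thesis unfolding eq .
    qed
    from less.hyps[OF lt P'1 P'2] obtain Q where Q: "\<forall>k<t. P' k \<subseteq> Q k \<and> Q k \<subseteq> B \<and> connected_set E (Q k)"
        "\<forall>k<t. \<forall>j<t. k \<noteq> j \<longrightarrow> Q k \<inter> Q j = {}" "(\<Union>k<t. Q k) = B"
      by (elim exE conjE)
    have "\<forall>k<t. P k \<subseteq> Q k"
    proof (intro allI impI)
      fix k assume k: "k < t"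
      have "P k \<subseteq> P' k" unfolding P'_def by auto
      moreover have "P' k \<subseteq> Q k" using Q(1) k by simp
      ultimately show "P k \<subseteq> Q k" by (rule subset_trans)
    qed
    then have "(\<forall>k<t. P k \<subseteq> Q k \<and> Q k \<subseteq> B \<and> connected_set E (Q k)) \<and>
             (\<forall>k<t. \<forall>j<t. k \<noteq> j \<longrightarrow> Q k \<inter> Q j = {}) \<and> (\<Union>k<t. Q k) = B" using Q by simp
    then show ?thesis by (rule exI[of _ Q])
  qed
qed



lemma Kst_from_common:
  assumes g: "graph V E" and AB: "A \<inter> B = {}" "A \<union> B = V" and cB: "connected_set E B"
    and S: "S \<subseteq> A" "card S = s" and T: "T \<subseteq> B" "card T = t" and t: "t \<ge> 1"
    and adj: "\<forall>a\<in>S. \<forall>b\<in>T. {a, b} \<in> E"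
  shows "\<not> no_Kst_minor s t V E"
proof -
  have fV: "finite V" using graph_finV[OF g] .
  have BV: "B \<subseteq> V" using AB(2) by blast
  have SV: "S \<subseteq> V" using AB(2) S(1) by blast
  have fB: "finite B" using finite_subset[OF BV fV] .
  have fS: "finite S" using finite_subset[OF SV fV] .
  have fT: "finite T" using fB T(1) by (rule finite_subset[rotated])
  obtain \<sigma> where \<sigma>: "bij_betw \<sigma> {0..<s} S" using ex_bij_betw_nat_finite[OF fS] S(2) by blast
  obtain \<tau> where \<tau>: "bij_betw \<tau> {0..<t} T" using ex_bij_betw_nat_finite[OF fT] T(2) by blast
  have \<tau>T: "\<tau> i \<in> T" if "i < t" for i using \<tau> that unfolding bij_betw_def by auto
  have \<tau>inj: "\<tau> i \<noteq> \<tau> j" if "i < t" "j < t" "i \<noteq> j" for i j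
    using \<tau> that unfolding bij_betw_def inj_on_def by auto
  have \<sigma>S: "\<sigma> i \<in> S" if "i < s" for i using \<sigma> that unfolding bij_betw_def by auto
  have \<sigma>inj: "\<sigma> i \<noteq> \<sigma> j" if "i < s" "j < s" "i \<noteq> j" for i j
    using \<sigma> that unfolding bij_betw_def inj_on_def by auto
  define P where "P i = {\<tau> i}" for i
  have P1: "\<forall>i<t. P i \<subseteq> B \<and> connected_set E (P i)"
  proof (intro allI impI)
    fix i assume i: "i < t"
    have "\<tau> i \<in> B" using \<tau>T[OF i] T(1) by blast
    then show "P i \<subseteq> B \<and> connected_set E (P i)" unfolding P_def using conn_single[of E "\<tau> i"] by simp
  qed
  have P2: "\<forall>i<t. \<forall>j<t. i \<noteq> j \<longrightarrow> P i \<inter> P j = {}"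
  proof (intro allI impI)
    fix i j assume "i < t" "j < t" "i \<noteq> j"
    then have "\<tau> i \<noteq> \<tau> j" by (rule \<tau>inj)
    then show "P i \<inter> P j = {}" unfolding P_def by simp
  qed
  from grow[OF cB fB t P1 P2] obtain Q where
    Q1: "\<forall>i<t. P i \<subseteq> Q i \<and> Q i \<subseteq> B \<and> connected_set E (Q i)" and
    Q2: "\<forall>i<t. \<forall>j<t. i \<noteq> j \<longrightarrow> Q i \<inter> Q j = {}" and Q3: "(\<Union>i<t. Q i) = B"
    by (elim exE conjE)
  have \<tau>Q: "\<tau> i \<in> Q i" if "i < t" for i using Q1 that unfolding P_def by blast
  have QB: "Q i \<subseteq> B" if "i < t" for i using Q1 that by blast
  have Qc: "connected_set E (Q i)" if "i < t" for i using Q1 that by blast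
  define idx where "idx x = (THE i. i < t \<and> x \<in> Q i)" for x
  have idx_eq: "idx x = i" if "i < t" "x \<in> Q i" for x i
  proof -
    have uniq: "\<And>j. j < t \<and> x \<in> Q j \<Longrightarrow> j = i" using Q2 that by blast
    have "i < t \<and> x \<in> Q i" using that by simp
    then show ?thesis unfolding idx_def using uniq by (rule the_equality)
  qed
  have idx_in: "idx x < t \<and> x \<in> Q (idx x)" if xB: "x \<in> B" for x
  proof -
    have "x \<in> (\<Union>i<t. Q i)" using Q3 xB by simp
    then obtain i where "i < t" "x \<in> Q i" by blast
    then show ?thesis using idx_eq by simp
  qed
  define Kb where "Kb = {{i, s + j} | i j. i < s \<and> j < t}"
  define EQ where "EQ = {{s + i, s + j} | i j. i < t \<and> j < t \<and> i \<noteq> j \<and> (\<exists>x\<in>Q i. \<exists>y\<in>Q j. {x, y} \<in> E)}"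
  define EH where "EH = Kb \<union> EQ"
  define Bh where "Bh = {s..<s+t}"
  have pathQ: "(\<lambda>a b. a \<in> Bh \<and> b \<in> Bh \<and> {a, b} \<in> EH)\<^sup>*\<^sup>* (s + idx u) (s + idx w)"
    if "(\<lambda>x y. x \<in> B \<and> y \<in> B \<and> {x, y} \<in> E)\<^sup>*\<^sup>* u w" for u w
    using that
  proof (induction rule: rtranclp_induct)
    case base then show ?case by simp
  next
    case (step y z)
    have y: "y \<in> B" "z \<in> B" "{y, z} \<in> E" using step(2) by auto
    have iy: "idx y < t" "y \<in> Q (idx y)" using idx_in[OF y(1)] by auto
    have iz: "idx z < t" "z \<in> Q (idx z)" using idx_in[OF y(2)] by auto
    show ?case
    proof (cases "idx y = idx z")
      case True then show ?thesis using step(3) by simp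
    next
      case False
      have "{s + idx y, s + idx z} \<in> EQ" unfolding EQ_def using iy iz y(3) False by blast
      then have "(\<lambda>a b. a \<in> Bh \<and> b \<in> Bh \<and> {a, b} \<in> EH) (s + idx y) (s + idx z)"
        using iy iz unfolding EH_def Bh_def by auto
      then show ?thesis using step(3) by (rule rtranclp.rtrancl_into_rtrancl[rotated])
    qed
  qed
  have gH: "graph {0..<s+t} EH"
    unfolding graph_def
  proof (intro conjI ballI)
    show "finite {0..<s+t}" by simp
    fix e assume "e \<in> EH"
    then consider (a) i j where "e = {i, s + j}" "i < s" "j < t"
      | (b) i j where "e = {s + i, s + j}" "i < t" "j < t" "i \<noteq> j"
      unfolding EH_def Kb_def EQ_def by blast
    then show "\<exists>u v. e = {u, v} \<and> u \<noteq> v \<and> u \<in> {0..<s+t} \<and> v \<in> {0..<s+t}"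
    proof cases
      case (a i j)
      then have "e = {i, s + j} \<and> i \<noteq> s + j \<and> i \<in> {0..<s+t} \<and> s + j \<in> {0..<s+t}" by simp
      then show ?thesis by blast
    next
      case (b i j)
      then have "e = {s + i, s + j} \<and> s + i \<noteq> s + j \<and> s + i \<in> {0..<s+t} \<and> s + j \<in> {0..<s+t}" by simp
      then show ?thesis by blast
    qed
  qed
  have cH: "connected_set EH Bh"
  proof (rule connI)
    show "Bh \<noteq> {}" using t unfolding Bh_def by simp
    fix u w assume uw: "u \<in> Bh" "w \<in> Bh"
    define i where "i = u - s"
    define j where "j = w - s"
    have ij: "i < t" "j < t" "u = s + i" "w = s + j" using uw unfolding Bh_def i_def j_def by auto
    have "\<tau> i \<in> B" "\<tau> j \<in> B" using QB \<tau>Q ij by auto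
    from conn_path[OF cB this] have "(\<lambda>a b. a \<in> Bh \<and> b \<in> Bh \<and> {a, b} \<in> EH)\<^sup>*\<^sup>* (s + idx (\<tau> i)) (s + idx (\<tau> j))"
      by (rule pathQ)
    moreover have "idx (\<tau> i) = i" "idx (\<tau> j) = j" using idx_eq \<tau>Q ij by auto
    ultimately show "(\<lambda>a b. a \<in> Bh \<and> b \<in> Bh \<and> {a, b} \<in> EH)\<^sup>*\<^sup>* u w" using ij by simp
  qed
  have k1: "{0..<s} \<inter> Bh = {}" unfolding Bh_def by auto
  have k2: "{0..<s} \<union> Bh = {0..<s+t}" unfolding Bh_def by auto
  have k3: "card {0..<s} = s" by simp
  have k4: "card Bh = t" unfolding Bh_def by simp
  have k5: "\<forall>v\<in>{0..<s}. \<forall>w\<in>Bh. {v, w} \<in> EH"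
  proof (intro ballI)
    fix v w assume "v \<in> {0..<s}" "w \<in> Bh"
    then have vw: "v < s" "w - s < t" "w = s + (w - s)" unfolding Bh_def by auto
    have "{v, w} \<in> Kb" unfolding Kb_def
      apply (rule CollectI)
      apply (rule exI[of _ v], rule exI[of _ "w - s"])
      using vw by simp
    then show "{v, w} \<in> EH" unfolding EH_def by simp
  qed
  have inK: "in_Kst s t {0..<s+t} EH"
    unfolding in_Kst_def
    apply (rule conjI[OF gH])
    apply (rule exI[of _ "{0..<s}"])
    apply (rule exI[of _ Bh])
    using k1 k2 k3 k4 k5 cH by simp
  define \<phi> where "\<phi> v = (if v < s then {\<sigma> v} else Q (v - s))" for v
  have mH: "mmap {0..<s+t} EH V E \<phi>"
    unfolding mmap_def
  proof (intro conjI ballI allI impI)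
    fix v assume v: "v \<in> {0..<s+t}"
    show "\<phi> v \<subseteq> V"
    proof (cases "v < s")
      case True then show ?thesis using \<sigma>S S(1) AB(2) unfolding \<phi>_def by auto
    next
      case False
      then have "v - s < t" using v by auto
      then have "Q (v - s) \<subseteq> V" using QB[of "v - s"] BV by blast
      then show ?thesis using False unfolding \<phi>_def by simp
    qed
    show "connected_set E (\<phi> v)"
    proof (cases "v < s")
      case True then show ?thesis using conn_single unfolding \<phi>_def by simp
    next
      case False
      then have "v - s < t" using v by auto
      then show ?thesis using Qc[of "v - s"] False unfolding \<phi>_def by simp
    qed
  next
    fix v w assume v: "v \<in> {0..<s+t}" and w: "w \<in> {0..<s+t}" and vw: "v \<noteq> w"
    show "\<phi> v \<inter> \<phi> w = {}"
    proof (cases "v < s")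
      case True
      show ?thesis
      proof (cases "w < s")
        case True2: True
        then show ?thesis using \<sigma>inj[of v w] True vw unfolding \<phi>_def by auto
      next
        case False
        have "\<sigma> v \<in> A" using \<sigma>S True S(1) by auto
        moreover have "Q (w - s) \<subseteq> B" by (rule QB) (use w False in auto)
        ultimately show ?thesis using True False AB(1) unfolding \<phi>_def by auto
      qed
    next
      case False
      show ?thesis
      proof (cases "w < s")
        case True
        have "\<sigma> w \<in> A" using \<sigma>S True S(1) by auto
        moreover have "Q (v - s) \<subseteq> B" by (rule QB) (use v False in auto)
        ultimately show ?thesis using True False AB(1) unfolding \<phi>_def by auto
      next
        case False2: False
        have "v - s \<noteq> w - s" "v - s < t" "w - s < t" using v w vw False False2 by auto
        then have "Q (v - s) \<inter> Q (w - s) = {}" using Q2 by blast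
        then show ?thesis using False False2 unfolding \<phi>_def by simp
      qed
    qed
  next
    fix v w assume "{v, w} \<in> EH"
    then consider (kb) "{v, w} \<in> Kb" | (eq) "{v, w} \<in> EQ" unfolding EH_def by blast
    then show "\<exists>x\<in>\<phi> v. \<exists>y\<in>\<phi> w. {x, y} \<in> E"
    proof cases
      case kb
      then obtain i j where ij: "{v, w} = {i, s + j}" "i < s" "j < t" unfolding Kb_def by blast
      have e: "{\<sigma> i, \<tau> j} \<in> E" "{\<tau> j, \<sigma> i} \<in> E" using adj \<sigma>S \<tau>T ij by (auto simp: insert_commute)
      have p1: "\<sigma> i \<in> \<phi> i" using ij unfolding \<phi>_def by simp
      have p2: "\<tau> j \<in> \<phi> (s + j)" using ij \<tau>Q unfolding \<phi>_def by simp
      have "(v = i \<and> w = s + j) \<or> (v = s + j \<and> w = i)" using ij(1) by (simp add: doubleton_eq_iff)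
      then show ?thesis using e p1 p2 by blast
    next
      case eq
      then obtain i j x y where ij: "{v, w} = {s + i, s + j}" "i < t" "j < t"
        "x \<in> Q i" "y \<in> Q j" "{x, y} \<in> E" unfolding EQ_def by blast
      have e: "{y, x} \<in> E" using ij(6) by (simp add: insert_commute)
      have p1: "\<phi> (s + i) = Q i" "\<phi> (s + j) = Q j" unfolding \<phi>_def by simp_all
      have "(v = s + i \<and> w = s + j) \<or> (v = s + j \<and> w = s + i)" using ij(1) by (simp add: doubleton_eq_iff)
      then show ?thesis using e ij p1 by blast
    qed
  qed
  show ?thesis unfolding no_Kst_minor_def using inK mH is_minor_iff by blast
qed



lemma star_conn:
  assumes "\<forall>b\<in>X. {a, b} \<in> E"
  shows "connected_set E (insert a X)"
proof (rule connI)
  show "insert a X \<noteq> {}" by simp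
  let ?R = "\<lambda>x y. x \<in> insert a X \<and> y \<in> insert a X \<and> {x, y} \<in> E"
  have toa: "?R\<^sup>*\<^sup>* u a" if "u \<in> insert a X" for u
  proof (cases "u = a")
    case True then show ?thesis by simp
  next
    case False
    then have "u \<in> X" using that by simp
    then have "{a, u} \<in> E" using assms by blast
    then have "{u, a} \<in> E" by (simp add: insert_commute)
    then have "?R u a" using that by simp
    then show ?thesis by (rule r_into_rtranclp)
  qed
  fix u w assume u: "u \<in> insert a X" and w: "w \<in> insert a X"
  have "?R\<^sup>*\<^sup>* w a" using toa[OF w] .
  then have "?R\<^sup>*\<^sup>* a w" by (rule rtp_sym)
  with toa[OF u] show "?R\<^sup>*\<^sup>* u w" by (rule rtranclp_trans)
qed

lemma avg_vertex:
  assumes fA: "finite A0" and ne: "A0 \<noteq> {}" and PA: "P \<subseteq> A0 \<times> A0" and cP: "card P \<le> D * card A0"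
  shows "\<exists>a\<in>A0. card {x. (a, x) \<in> P} \<le> D"
proof (rule ccontr)
  assume "\<not> ?thesis"
  then have gt: "\<forall>a\<in>A0. D < card {x. (a, x) \<in> P}" by (simp add: not_le)
  have eq: "P = (SIGMA a:A0. {x. (a, x) \<in> P})" using PA by blast
  have fin: "\<forall>a\<in>A0. finite {x. (a, x) \<in> P}"
  proof
    fix a assume "a \<in> A0"
    have "{x. (a, x) \<in> P} \<subseteq> A0" using PA by blast
    then show "finite {x. (a, x) \<in> P}" using fA by (rule finite_subset)
  qed
  have "card P = (\<Sum>a\<in>A0. card {x. (a, x) \<in> P})"
    by (subst eq) (rule card_SigmaI[OF fA fin])
  moreover have "(\<Sum>a\<in>A0. D) < (\<Sum>a\<in>A0. card {x. (a, x) \<in> P})"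
    by (rule sum_strict_mono[OF fA ne]) (use gt in blast)
  moreover have "(\<Sum>a\<in>A0. D) = D * card A0" by simp
  ultimately show False using cP by linarith
qed

definition pick :: "nat \<Rightarrow> nat \<Rightarrow> 'a set \<Rightarrow> 'a" where
  "pick s j S = (SOME f. bij_betw f {0..<s} S) j"

lemma pick_props:
  assumes "finite S" "card S = s"
  shows "\<forall>j<s. pick s j S \<in> S" "\<forall>x\<in>S. \<exists>j<s. pick s j S = x"
proof -
  have "\<exists>f. bij_betw f {0..<s} S" using ex_bij_betw_nat_finite[OF assms(1)] assms(2) by simp
  then have b: "bij_betw (SOME f. bij_betw f {0..<s} S) {0..<s} S" by (rule someI_ex)
  have im: "(SOME f. bij_betw f {0..<s} S) ` {0..<s} = S" using b by (simp add: bij_betw_def)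
  show "\<forall>j<s. pick s j S \<in> S" unfolding pick_def using im by auto
  show "\<forall>x\<in>S. \<exists>j<s. pick s j S = x" unfolding pick_def using im by force
qed

lemma family_bound:
  fixes N :: "'a \<Rightarrow> 'a set"
  assumes nf: "no_Kst_minor s t V E" and t: "t \<ge> 1" and s: "s \<ge> 1" and g: "graph V E"
    and AB: "A \<inter> B = {}" "A \<union> B = V"
    and N: "\<forall>b\<in>B. N b \<subseteq> A \<and> card (N b) = s \<and> (\<forall>a\<in>N b. {a, b} \<in> E)"
  shows "A0 \<subseteq> A \<Longrightarrow> card {S \<in> N ` B. S \<subseteq> A0} \<le> 2 ^ (2 * s * 2 ^ (s + t) + 1) * card A0"
proof (induction "card A0" arbitrary: A0 rule: less_induct)
  case less
  let ?c = "2 ^ (s + t) :: nat"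
  let ?D = "2 * s * ?c"
  let ?K = "2 ^ (?D + 1) :: nat"
  let ?F0 = "{S \<in> N ` B. S \<subseteq> A0}"
  have fV: "finite V" using graph_finV[OF g] .
  have AV: "A \<subseteq> V" using AB by blast
  have BV: "B \<subseteq> V" using AB by blast
  have fA0: "finite A0" using finite_subset[OF _ fV] less.prems AV by blast
  have NB: "N b \<subseteq> A" "card (N b) = s" "\<And>a. a \<in> N b \<Longrightarrow> {a, b} \<in> E" if "b \<in> B" for b
    using N that by auto
  have fN: "finite (N b)" if "b \<in> B" for b using finite_subset[OF NB(1)[OF that]] finite_subset[OF AV fV] by blast
  show ?case
  proof (cases "A0 = {}")
    case True
    have "?F0 = {}"
    proof (rule equals0I)
      fix S assume S: "S \<in> ?F0"
      then obtain b where b: "b \<in> B" "S = N b" by blast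
      have "card S = s" using NB(2)[OF b(1)] b(2) by simp
      moreover have "S = {}" using S True by blast
      ultimately show False using s by simp
    qed
    then have "card ?F0 = 0" by (metis card.empty)
    then show ?thesis by simp
  next
    case False
    define bS where "bS S = (SOME b. b \<in> B \<and> N b = S)" for S
    have bS: "bS S \<in> B \<and> N (bS S) = S" if "S \<in> N ` B" for S
    proof -
      have "\<exists>b. b \<in> B \<and> N b = S" using that by blast
      then show ?thesis unfolding bS_def by (rule someI_ex)
    qed
    have F0S: "finite S \<and> card S = s \<and> S \<subseteq> A0" if S0: "S \<in> ?F0" for S
    proof -
      obtain b where b: "b \<in> B" "S = N b" using S0 by blast
      then show ?thesis using fN[OF b(1)] NB(2)[OF b(1)] S0 by simp
    qed
    have pk1: "pick s j S \<in> S" if "S \<in> ?F0" "j < s" for S j using pick_props(1)[of S s] F0S[OF that(1)] that(2) by blast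
    have pk2: "\<exists>j<s. pick s j S = x" if "S \<in> ?F0" "x \<in> S" for S x
      using pick_props(2)[of S s] F0S[OF that(1)] that(2) by blast
    have adjS: "{x, bS S} \<in> E" if "S \<in> ?F0" "x \<in> S" for S x
    proof -
      have S: "S \<in> N ` B" using that(1) by blast
      have "x \<in> N (bS S)" using bS[OF S] that(2) by simp
      then show ?thesis using NB(3)[of "bS S" x] bS[OF S] by blast
    qed
    define H where "H j = {{pick s j S, x} | S x. S \<in> ?F0 \<and> x \<in> S \<and> x \<noteq> pick s j S}" for j
    define \<beta> where "\<beta> j a = insert a (bS ` {S \<in> ?F0. pick s j S = a})" for j a
    have gH: "graph A0 (H j)" if j: "j < s" for j
      unfolding graph_def
    proof (intro conjI ballI)
      show "finite A0" by (rule fA0)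
      fix e assume "e \<in> H j"
      then obtain S x where Sx: "e = {pick s j S, x}" "S \<in> ?F0" "x \<in> S" "x \<noteq> pick s j S"
        unfolding H_def by blast
      have "pick s j S \<in> A0" "x \<in> A0" using pk1[OF Sx(2) j] Sx(3) F0S[OF Sx(2)] by auto
      then have "e = {pick s j S, x} \<and> pick s j S \<noteq> x \<and> pick s j S \<in> A0 \<and> x \<in> A0" using Sx by auto
      then show "\<exists>u v. e = {u, v} \<and> u \<noteq> v \<and> u \<in> A0 \<and> v \<in> A0" by blast
    qed
    have mH: "mmap A0 (H j) V E (\<beta> j)" if j: "j < s" for j
      unfolding mmap_def
    proof (intro conjI ballI allI impI)
      fix a assume a: "a \<in> A0"
      have "a \<in> V" using a less.prems AV by blast
      moreover have "bS S \<in> V" if "S \<in> ?F0" for S using bS[of S] that BV by blast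
      ultimately show "\<beta> j a \<subseteq> V" unfolding \<beta>_def by blast
      show "connected_set E (\<beta> j a)" unfolding \<beta>_def
      proof (rule star_conn, rule ballI)
        fix b assume "b \<in> bS ` {S \<in> ?F0. pick s j S = a}"
        then obtain S where S: "S \<in> ?F0" "pick s j S = a" "b = bS S" by blast
        have "{a, bS S} \<in> E" using adjS[OF S(1)] pk1[OF S(1) j] S(2) by blast
        then show "{a, b} \<in> E" using S(3) by simp
      qed
    next
      fix a a' assume a: "a \<in> A0" and a': "a' \<in> A0" and aa: "a \<noteq> a'"
      show "\<beta> j a \<inter> \<beta> j a' = {}"
      proof (rule equals0I)
        fix z assume z: "z \<in> \<beta> j a \<inter> \<beta> j a'"
        have zA: "z \<in> A \<Longrightarrow> z \<notin> B" using AB(1) by blast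
        have aA: "a \<in> A" "a' \<in> A" using a a' less.prems by auto
        show False
        proof (cases "z = a \<or> z = a'")
          case True
          then show False
          proof
            assume za: "z = a"
            then have "z \<in> bS ` {S \<in> ?F0. pick s j S = a'}" using z aa unfolding \<beta>_def by auto
            then obtain S where "S \<in> ?F0" "z = bS S" by blast
            then have "z \<in> B" using bS by blast
            then show False using zA aA za by blast
          next
            assume za: "z = a'"
            then have "z \<in> bS ` {S \<in> ?F0. pick s j S = a}" using z aa unfolding \<beta>_def by auto
            then obtain S where "S \<in> ?F0" "z = bS S" by blast
            then have "z \<in> B" using bS by blast
            then show False using zA aA za by blast
          qed
        next
          case False
          then obtain S S' where S: "S \<in> ?F0" "pick s j S = a" "z = bS S"
            and S': "S' \<in> ?F0" "pick s j S' = a'" "z = bS S'" using z unfolding \<beta>_def by blast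
          have "S = N z" using bS[of S] S by auto
          moreover have "S' = N z" using bS[of S'] S' by auto
          ultimately show False using S(2) S'(2) aa by simp
        qed
      qed
    next
      fix v w assume "{v, w} \<in> H j"
      then obtain S x where Sx: "{v, w} = {pick s j S, x}" "S \<in> ?F0" "x \<in> S" "x \<noteq> pick s j S"
        unfolding H_def by blast
      have b1: "bS S \<in> \<beta> j (pick s j S)" using Sx(2) unfolding \<beta>_def by blast
      have b2: "x \<in> \<beta> j x" unfolding \<beta>_def by simp
      have e: "{x, bS S} \<in> E" "{bS S, x} \<in> E" using adjS[OF Sx(2,3)] by (auto simp: insert_commute)
      have "(v = pick s j S \<and> w = x) \<or> (v = x \<and> w = pick s j S)" using Sx(1) by (simp add: doubleton_eq_iff)
      then show "\<exists>p\<in>\<beta> j v. \<exists>q\<in>\<beta> j w. {p, q} \<in> E" using b1 b2 e by blast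
    qed
    have cH: "card (H j) \<le> ?c * card A0" if "j < s" for j
      using minor_density[OF nf t gH[OF that] mH[OF that]] .
    have fH: "finite (H j)" if "j < s" for j using graph_finE[OF gH[OF that]] .
    define P where "P = {(a, x). a \<in> A0 \<and> x \<in> A0 \<and> a \<noteq> x \<and> (\<exists>S\<in>?F0. a \<in> S \<and> x \<in> S)}"
    have Psub: "P \<subseteq> (\<Union>j<s. {(a, x). {a, x} \<in> H j})"
    proof
      fix p assume "p \<in> P"
      then obtain a x S where p: "p = (a, x)" "a \<noteq> x" "S \<in> ?F0" "a \<in> S" "x \<in> S" unfolding P_def by blast
      obtain j where j: "j < s" "pick s j S = a" using pk2[OF p(3,4)] by blast
      have "{a, x} \<in> H j" unfolding H_def using p j by blast
      then show "p \<in> (\<Union>j<s. {(a, x). {a, x} \<in> H j})" using p(1) j(1) by blast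
    qed
    have "card P \<le> card (\<Union>j<s. {(a, x). {a, x} \<in> H j})"
      using Psub pairs_le[OF fH] by (intro card_mono) auto
    also have "\<dots> \<le> (\<Sum>j<s. card {(a, x). {a, x} \<in> H j})" by (rule card_UN_le) simp
    also have "\<dots> \<le> (\<Sum>j<s. 2 * (?c * card A0))"
    proof (rule sum_mono)
      fix j assume "j \<in> {..<s}"
      then have j: "j < s" by simp
      have "card {(a, x). {a, x} \<in> H j} \<le> 2 * card (H j)" using pairs_le[OF fH[OF j]] by simp
      also have "\<dots> \<le> 2 * (?c * card A0)" using cH[OF j] by simp
      finally show "card {(a, x). {a, x} \<in> H j} \<le> 2 * (?c * card A0)" .
    qed
    also have "\<dots> = ?D * card A0" by simp
    finally have cP: "card P \<le> ?D * card A0" .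
    have PA: "P \<subseteq> A0 \<times> A0" unfolding P_def by blast
    obtain a where a: "a \<in> A0" and ca: "card {x. (a, x) \<in> P} \<le> ?D"
      using avg_vertex[OF fA0 False PA cP] by blast
    let ?X = "{x. (a, x) \<in> P}"
    have XA: "?X \<subseteq> A0" using PA by blast
    have fX: "finite ?X" using finite_subset[OF XA fA0] .
    have sub1: "{S \<in> ?F0. a \<in> S} \<subseteq> Pow (insert a ?X)"
    proof
      fix S assume S: "S \<in> {S \<in> ?F0. a \<in> S}"
      have "S \<subseteq> insert a ?X"
      proof
        fix x assume x: "x \<in> S"
        show "x \<in> insert a ?X"
        proof (cases "x = a")
          case True then show ?thesis by simp
        next
          case False
          have "x \<in> A0" using x F0S[of S] S by blast
          then have "(a, x) \<in> P" unfolding P_def using a False S x by blast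
          then show ?thesis by simp
        qed
      qed
      then show "S \<in> Pow (insert a ?X)" by simp
    qed
    have "card {S \<in> ?F0. a \<in> S} \<le> card (Pow (insert a ?X))"
      using sub1 fX by (intro card_mono) auto
    also have "\<dots> = 2 ^ card (insert a ?X)" using fX by (simp add: card_Pow)
    also have "\<dots> \<le> 2 ^ (?D + 1)"
    proof (rule power_increasing)
      have "card (insert a ?X) \<le> Suc (card ?X)" by (rule card_insert_le_m1) auto
      then show "card (insert a ?X) \<le> ?D + 1" using ca by simp
    qed simp
    finally have c1: "card {S \<in> ?F0. a \<in> S} \<le> ?K" .
    have eq2: "{S \<in> ?F0. a \<notin> S} = {S \<in> N ` B. S \<subseteq> A0 - {a}}" by blast
    have lt: "card (A0 - {a}) < card A0" using fA0 a by (rule card_Diff1_less)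
    have sub2: "A0 - {a} \<subseteq> A" using less.prems by blast
    have c2: "card {S \<in> ?F0. a \<notin> S} \<le> ?K * card (A0 - {a})"
      unfolding eq2 by (rule less.hyps[OF lt sub2])
    have spl: "?F0 = {S \<in> ?F0. a \<in> S} \<union> {S \<in> ?F0. a \<notin> S}" by blast
    have "card ?F0 \<le> card {S \<in> ?F0. a \<in> S} + card {S \<in> ?F0. a \<notin> S}"
      by (subst spl) (rule card_Un_le)
    also have "\<dots> \<le> ?K + ?K * card (A0 - {a})" using c1 c2 by (rule add_mono)
    also have "\<dots> = ?K * card A0"
    proof -
      have "card (A0 - {a}) + 1 = card A0" using fA0 a card_Diff1_less lt by simp
      then show ?thesis by (metis add.commute mult.commute mult_Suc Suc_eq_plus1)
    qed
    finally show ?thesis .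
  qed
qed



theorem lemma5p1:
  fixes s t :: nat
  assumes "s \<ge> 1" and "t \<ge> 1"
  shows "\<exists>\<delta>::real. \<forall>(V :: 'a set) E A B.
           graph V E \<longrightarrow> no_Kst_minor s t V E \<longrightarrow>
           A \<inter> B = {} \<longrightarrow> A \<union> B = V \<longrightarrow> connected_set E B \<longrightarrow>
           (\<forall>v\<in>B. card {u \<in> A. {u, v} \<in> E} \<ge> s) \<longrightarrow>
           real (card B) \<le> \<delta> * real (card A)"
proof -
  let ?K = "2 ^ (2 * s * 2 ^ (s + t) + 1) :: nat"
  show ?thesis
  proof (rule exI[of _ "real (t * ?K)"], intro allI impI)
    fix V :: "'a set" and E A B
    assume g: "graph V E" and nf: "no_Kst_minor s t V E" and AB1: "A \<inter> B = {}" and AB2: "A \<union> B = V"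
      and cB: "connected_set E B" and deg: "\<forall>v\<in>B. card {u \<in> A. {u, v} \<in> E} \<ge> s"
    have fV: "finite V" using graph_finV[OF g] .
    have fA: "finite A" using fV AB2 by (intro finite_subset[OF _ fV]) blast
    have fB: "finite B" using fV AB2 by (intro finite_subset[OF _ fV]) blast
    define N where "N b = (SOME X. X \<subseteq> {u \<in> A. {u, b} \<in> E} \<and> card X = s)" for b
    have Nb: "N b \<subseteq> {u \<in> A. {u, b} \<in> E} \<and> card (N b) = s" if b: "b \<in> B" for b
    proof -
      have "s \<le> card {u \<in> A. {u, b} \<in> E}" using deg b by blast
      then obtain X where "X \<subseteq> {u \<in> A. {u, b} \<in> E}" "card X = s" by (rule obtain_subset_with_card_n)
      then have "\<exists>X. X \<subseteq> {u \<in> A. {u, b} \<in> E} \<and> card X = s" by blast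
      then show ?thesis unfolding N_def by (rule someI_ex)
    qed
    have N: "\<forall>b\<in>B. N b \<subseteq> A \<and> card (N b) = s \<and> (\<forall>a\<in>N b. {a, b} \<in> E)"
    proof
      fix b assume "b \<in> B"
      from Nb[OF this] show "N b \<subseteq> A \<and> card (N b) = s \<and> (\<forall>a\<in>N b. {a, b} \<in> E)" by blast
    qed
    have fam: "card {S \<in> N ` B. S \<subseteq> A} \<le> ?K * card A"
      by (rule family_bound[OF nf assms(2) assms(1) g AB1 AB2 N]) simp
    have eqF: "{S \<in> N ` B. S \<subseteq> A} = N ` B" using N by blast
    have fib: "card {b \<in> B. N b = S} \<le> t" if S: "S \<in> N ` B" for S
    proof (rule ccontr)
      assume "\<not> ?thesis"
      then have "t \<le> card {b \<in> B. N b = S}" by simp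
      then obtain T where T: "T \<subseteq> {b \<in> B. N b = S}" "card T = t" by (rule obtain_subset_with_card_n)
      obtain b0 where b0: "b0 \<in> B" "S = N b0" using S by blast
      have SA: "S \<subseteq> A" "card S = s" using N b0 by auto
      have TB: "T \<subseteq> B" using T by blast
      have adj: "\<forall>a\<in>S. \<forall>b\<in>T. {a, b} \<in> E"
      proof (intro ballI)
        fix a b assume a: "a \<in> S" and b: "b \<in> T"
        have "b \<in> B" "N b = S" using T b by auto
        then show "{a, b} \<in> E" using N a by blast
      qed
      show False using Kst_from_common[OF g AB1 AB2 cB SA TB T(2) assms(2) adj] nf by blast
    qed
    have "B \<subseteq> (\<Union>S\<in>N ` B. {b \<in> B. N b = S})" by blast
    then have "card B \<le> card (\<Union>S\<in>N ` B. {b \<in> B. N b = S})"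
      using fB by (intro card_mono) auto
    also have "\<dots> \<le> (\<Sum>S\<in>N ` B. card {b \<in> B. N b = S})" by (rule card_UN_le) (use fB in simp)
    also have "\<dots> \<le> (\<Sum>S\<in>N ` B. t)" by (rule sum_mono) (rule fib)
    also have "\<dots> = t * card (N ` B)" by simp
    also have "\<dots> \<le> t * (?K * card A)" using fam eqF by simp
    finally have "card B \<le> t * ?K * card A" by simp
    then have "real (card B) \<le> real (t * ?K * card A)" by (simp only: of_nat_le_iff)
    then show "real (card B) \<le> real (t * ?K) * real (card A)" by simp
  qed
qed

end
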